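(* Let $f_1,f_2:\mathbb R^d\to\mathbb R$ be convex with $\nabla f_i$ globally Lipschitz continuous with modulus $L_i>0$ ($i=1,2$), let $f_3:\mathbb R^d\to\mathbb R\cup\{+\infty\}$ be proper and lower semicontinuous, and assume $\varphi:=f_1+f_2+f_3$ has a nonempty set of minimizers. Let $\gamma\in(0,\frac{1}{L_1+L_2})$ and $\lambda,\alpha>0$, and let $(x_1^k,x_2^k,x_3^k)_k$, $(z_1^k,z_2^k)_k$ be generated by the relaxed Ryu splitting method. Set $\xi^k=\big(x_1^k,x_2^k,x_3^k,\gamma^{-1}(x_1^k-z_1^k),\gamma^{-1}(\alpha(x_2^k-x_1^k)-z_2^k)\big)$. Then for all $k\ge1$, $\varphi_\gamma^{\mathrm{Ryu}}(z_1^k,z_2^k)=\mathcal L_{1/\gamma_1,1/\gamma_2}(\xi^k)$, where $\gamma_1=\gamma/\alpha$, $\gamma_2=\gamma/(1-\alpha)$.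
   Context: For $h:\mathbb R^d\to\mathbb R\cup\{+\infty\}$ and $\gamma>0$, $\mathrm{prox}_{\gamma h}(z):=\operatorname{argmin}_{y}\{h(y)+\frac{1}{2\gamma}\|y-z\|^2\}$. Conventions $\frac{c}{0}=\infty$, $\frac{d}{\infty}=0$ ($c>0,d\in\mathbb R$). The relaxed Ryu splitting method: given $z_1^0,z_2^0\in\mathbb R^d$, for $k\ge0$, $x_1^k=\mathrm{prox}_{\gamma f_1}(z_1^k)$, $x_2^k=\mathrm{prox}_{\frac{\gamma}{\alpha}f_2}(\frac{z_2^k}{\alpha}+x_1^k)$, $x_3^k\in\mathrm{prox}_{\gamma f_3}(x_1^k-z_1^k+x_2^k-z_2^k)$, $z_1^{k+1}=z_1^k+\lambda(x_3^k-x_1^k)$, $z_2^{k+1}=z_2^k+\lambda(x_3^k-x_2^k)$. Relaxed Ryu envelope: for $(z_1,z_2)$, $x_1=\mathrm{prox}_{\gamma f_1}(z_1)$, $x_2=\mathrm{prox}_{\frac{\gamma}{\alpha}f_2}(\frac{z_2}{\alpha}+x_1)$, $\varphi_\gamma^{\mathrm{Ryu}}(z_1,z_2):=\min_{y}\{f_3(y)+\sum_{i=1}^2[f_i(x_i)+\langle y-x_i,\nabla f_i(x_i)\rangle+\frac{1}{2\gamma_i}\|y-x_i\|^2]\}$. Augmented Lagrangian: $\mathcal L_{\beta_1,\beta_2}(x_1,x_2,x_3,\mu_1,\mu_2)=f_3(x_3)+\sum_{i=1}^2\big(f_i(x_i)+\langle\mu_i,x_i-x_3\rangle+\frac{\beta_i}{2}\|x_i-x_3\|^2\big)$.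 *)

theory Defs
  imports "HOL-Analysis.Analysis"
begin

text \<open>Extended-real-valued functions model functions into R \<union> {+\<infinity>}.\<close>

definition proper_fun :: "('a \<Rightarrow> ereal) \<Rightarrow> bool" where
  "proper_fun f \<longleftrightarrow> (\<exists>x. f x \<noteq> \<infinity>) \<and> (\<forall>x. f x \<noteq> -\<infinity>)"

definition lsc_fun :: "('a::topological_space \<Rightarrow> ereal) \<Rightarrow> bool" where
  "lsc_fun f \<longleftrightarrow> (\<forall>x c. c < f x \<longrightarrow> (\<forall>\<^sub>F y in at x. c < f y))"

definition prox_set :: "real \<Rightarrow> ('a::real_inner \<Rightarrow> ereal) \<Rightarrow> 'a \<Rightarrow> 'a set" where
  "prox_set \<gamma> h z = {y. \<forall>u. h y + ereal (norm (y - z)^2 / (2*\<gamma>))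
                              \<le> h u + ereal (norm (u - z)^2 / (2*\<gamma>))}"

text \<open>Single-valued prox (used for the real-valued convex smooth functions, where it is unique).\<close>
definition prox :: "real \<Rightarrow> ('a::real_inner \<Rightarrow> real) \<Rightarrow> 'a \<Rightarrow> 'a" where
  "prox \<gamma> h z = (THE y. y \<in> prox_set \<gamma> (\<lambda>x. ereal (h x)) z)"

text \<open>Relaxed Ryu envelope; g1, g2 are the gradients of f1, f2.
  The coefficients 1/(2 gamma_i) are written as alpha/(2 gamma) and (1-alpha)/(2 gamma),
  i.e. with gamma_1 = gamma/alpha, gamma_2 = gamma/(1-alpha) and the conventions c/0 = \<infinity>, d/\<infinity> = 0.\<close>
definition ryu_env ::
  "real \<Rightarrow> real \<Rightarrow> ('a::real_inner \<Rightarrow> real) \<Rightarrow> ('a \<Rightarrow> real) \<Rightarrow> ('a \<Rightarrow> ereal)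
   \<Rightarrow> ('a \<Rightarrow> 'a) \<Rightarrow> ('a \<Rightarrow> 'a) \<Rightarrow> 'a \<Rightarrow> 'a \<Rightarrow> ereal" where
  "ryu_env \<gamma> \<alpha> f1 f2 f3 g1 g2 z1 z2 =
    (let x1 = prox \<gamma> f1 z1;
         x2 = prox (\<gamma>/\<alpha>) f2 (z2 /\<^sub>R \<alpha> + x1)
     in (INF y. f3 y
          + ereal (f1 x1 + inner (y - x1) (g1 x1) + (\<alpha>/(2*\<gamma>)) * norm (y - x1)^2)
          + ereal (f2 x2 + inner (y - x2) (g2 x2) + ((1-\<alpha>)/(2*\<gamma>)) * norm (y - x2)^2)))"

definition aug_lagr ::
  "real \<Rightarrow> real \<Rightarrow> ('a::real_inner \<Rightarrow> real) \<Rightarrow> ('a \<Rightarrow> real) \<Rightarrow> ('a \<Rightarrow> ereal)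
   \<Rightarrow> 'a \<Rightarrow> 'a \<Rightarrow> 'a \<Rightarrow> 'a \<Rightarrow> 'a \<Rightarrow> ereal" where
  "aug_lagr \<beta>1 \<beta>2 f1 f2 f3 x1 x2 x3 \<mu>1 \<mu>2 =
     f3 x3
     + ereal (f1 x1 + inner \<mu>1 (x1 - x3) + (\<beta>1/2) * norm (x1 - x3)^2)
     + ereal (f2 x2 + inner \<mu>2 (x2 - x3) + (\<beta>2/2) * norm (x2 - x3)^2)"

end

theory Submission
  imports Defs
begin

lemma tangent_ineq:
  fixes f :: "'a::real_inner \<Rightarrow> real"
  assumes cvx: "convex_on UNIV f"
    and der: "\<And>x. (f has_derivative (\<lambda>h. inner (g x) h)) (at x)"
  shows "f y \<ge> f x + inner (g x) (y - x)"
proof -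
  define \<phi> where "\<phi> s = f (x + s *\<^sub>R (y - x))" for s :: real
  have c: "convex_on UNIV \<phi>"
    unfolding convex_on_def \<phi>_def
  proof (intro conjI allI impI ballI)
    fix a b :: real and u v :: real
    assume uv: "0 \<le> u" "0 \<le> v" "u + v = 1"
    have "x + (u * a + v * b) *\<^sub>R (y - x) = u *\<^sub>R (x + a *\<^sub>R (y - x)) + v *\<^sub>R (x + b *\<^sub>R (y - x))"
      using uv by (simp add: algebra_simps flip: scaleR_add_left)
    then show "f (x + (u *\<^sub>R a + v *\<^sub>R b) *\<^sub>R (y - x)) \<le> u * f (x + a *\<^sub>R (y - x)) + v * f (x + b *\<^sub>R (y - x))"
      using cvx uv unfolding convex_on_def by simp
  qed simp
  have "((\<lambda>s. x + s *\<^sub>R (y - x)) has_derivative (\<lambda>s. s *\<^sub>R (y - x))) (at 0)"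
    by (intro derivative_eq_intros) auto
  note lin = this
  have "(\<phi> has_derivative (\<lambda>s. inner (g x) (s *\<^sub>R (y - x)))) (at 0)"
    unfolding \<phi>_def using has_derivative_compose[OF lin, of f "\<lambda>h. inner (g x) h"] der[of x] by simp
  then have "(\<phi> has_field_derivative inner (g x) (y - x)) (at 0)"
    unfolding has_field_derivative_def by (simp add: mult.commute[of _ "inner (g x) (y - x)"])
  from convex_on_imp_above_tangent[OF c connected_UNIV _ _ this[THEN has_field_derivative_at_within], of 1]
  have "\<phi> 1 - \<phi> 0 \<ge> inner (g x) (y - x)" by simp
  then show ?thesis unfolding \<phi>_def by simp
qed

lemma prox_min_ineq:
  fixes f :: "'a::real_inner \<Rightarrow> real"
  assumes cvx: "convex_on UNIV f"
    and der: "\<And>x. (f has_derivative (\<lambda>h. inner (g x) h)) (at x)"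
    and t: "t > 0" and gy: "g y = (1/t) *\<^sub>R (z - y)"
  shows "f u + norm (u - z)^2 / (2*t) \<ge> f y + norm (y - z)^2 / (2*t) + norm (u - y)^2 / (2*t)"
proof -
  have tg: "f u \<ge> f y + inner (z - y) (u - y) / t"
    using tangent_ineq[OF cvx der, where x=y and y=u] gy by (simp add: inner_commute)
  have "u - z = (u - y) + (y - z)" by simp
  then have n: "norm (u - z)^2 = norm (u - y)^2 + 2 * inner (u - y) (y - z) + norm (y - z)^2"
    by (metis power2_norm_eq_inner inner_add_left inner_add_right inner_commute mult_2 add.assoc)
  have i: "inner (z - y) (u - y) = - inner (u - y) (y - z)"
    by (metis inner_commute inner_minus_right minus_diff_eq)
  have "f y + norm (y - z)^2 / (2*t) + norm (u - y)^2 / (2*t) = f y + inner (z - y) (u - y) / t + norm (u - z)^2 / (2*t)"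
    using t unfolding n i by (simp add: field_simps)
  then show ?thesis using tg by linarith
qed

lemma prox_exists:
  fixes f :: "'a::euclidean_space \<Rightarrow> real"
  assumes cvx: "convex_on UNIV f"
    and der: "\<And>x. (f has_derivative (\<lambda>h. inner (g x) h)) (at x)"
    and t: "t > 0"
  shows "\<exists>y. g y = (1/t) *\<^sub>R (z - y)"
proof -
  define h where "h u = f u + inner (u - z) (u - z) / (2*t)" for u
  define R where "R = 2 * t * norm (g z) + 1"
  have contf: "continuous_on UNIV f"
    using der has_derivative_continuous by (metis continuous_at_imp_continuous_on)
  have conth: "continuous_on (cball z R) h"
    unfolding h_def using t by (intro continuous_intros continuous_on_subset[OF contf]) auto
  have "R > 0" using t unfolding R_def by (simp add: add_nonneg_pos)
  then obtain x where xin: "x \<in> cball z R" and xmin: "\<forall>y\<in>cball z R. h x \<le> h y"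
    using continuous_attains_inf[OF compact_cball _ conth] by fastforce
  have glob: "h x \<le> h u" for u
  proof (cases "u \<in> cball z R")
    case True then show ?thesis using xmin by blast
  next
    case False
    define r where "r = norm (u - z)"
    have rR: "r > R" using False unfolding r_def by (simp add: dist_norm norm_minus_commute)
    have "f u \<ge> f z + inner (g z) (u - z)" using tangent_ineq[OF cvx der] by blast
    moreover have "inner (g z) (u - z) \<ge> - norm (g z) * r"
      unfolding r_def using Cauchy_Schwarz_ineq2[of "g z" "u - z"] by linarith
    moreover have "inner (u - z) (u - z) = r^2" unfolding r_def by (simp add: power2_norm_eq_inner)
    moreover have "- norm (g z) * r + r^2 / (2*t) > 0"
    proof -
      have "r / (2*t) > norm (g z)" using rR t unfolding R_def by (simp add: field_simps)
      then have "r * (r / (2*t)) > r * norm (g z)" using rR \<open>R > 0\<close> by (intro mult_strict_left_mono) auto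
      then show ?thesis by (simp add: power2_eq_square field_simps)
    qed
    ultimately have "h u > h z" unfolding h_def by simp
    moreover have "h x \<le> h z" using xmin \<open>R > 0\<close> by simp
    ultimately show ?thesis by simp
  qed
  have hd: "(h has_derivative (\<lambda>v. inner (g x) v + (inner v (x - z) + inner (x - z) v) / (2*t))) (at x)"
    unfolding h_def using t der[of x] by (intro derivative_eq_intros) auto
  have "(\<lambda>v. inner (g x) v + (inner v (x - z) + inner (x - z) v) / (2*t)) = (\<lambda>v. 0)"
    by (rule has_derivative_local_min[OF hd]) (use glob in auto)
  note fe = fun_cong[OF this]
  define w where "w = g x + (1/t) *\<^sub>R (x - z)"
  have "inner (g x) w + (inner w (x - z) + inner (x - z) w) / (2*t) = 0" using fe[of w] by simp
  moreover have "inner w w = inner (g x + (1/t) *\<^sub>R (x - z)) w" using w_def by simp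
  moreover have "inner (g x + (1/t) *\<^sub>R (x - z)) w = inner (g x) w + inner (x - z) w / t"
    by (simp add: inner_add_left)
  moreover have "inner w (x - z) = inner (x - z) w" by (rule inner_commute)
  ultimately have "inner w w = 0" using t by (simp add: field_simps)
  then have "w = 0" by simp
  then have "g x = (1/t) *\<^sub>R (z - x)" unfolding w_def by (simp add: algebra_simps eq_neg_iff_add_eq_0[symmetric])
  then show ?thesis by blast
qed

definition QQ :: "real \<Rightarrow> real \<Rightarrow> 'a::real_inner \<Rightarrow> 'a \<Rightarrow> 'a \<Rightarrow> 'a \<Rightarrow> 'a \<Rightarrow> real" where
  "QQ \<gamma> \<alpha> a1 a2 b1 b2 y = inner (y - a1) ((1/\<gamma>) *\<^sub>R (b1 - a1)) + (\<alpha>/(2*\<gamma>)) * norm (y - a1)^2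
    + inner (y - a2) ((1/(\<gamma>/\<alpha>)) *\<^sub>R (b2 /\<^sub>R \<alpha> + a1 - a2)) + ((1-\<alpha>)/(2*\<gamma>)) * norm (y - a2)^2
    - norm (y - (a1 - b1 + a2 - b2))^2 / (2*\<gamma>)"

lemma QQ_const:
  assumes "\<gamma> > 0" "\<alpha> > 0"
  shows "QQ \<gamma> \<alpha> a1 a2 b1 b2 y = QQ \<gamma> \<alpha> a1 a2 b1 b2 0"
  using assms
  unfolding QQ_def power2_norm_eq_inner
  by (simp add: inner_diff_left inner_diff_right inner_add_left inner_add_right inner_commute field_simps)

lemma prox_grad:
  fixes f :: "'a::euclidean_space \<Rightarrow> real"
  assumes cvx: "convex_on UNIV f"
    and der: "\<And>x. (f has_derivative (\<lambda>h. inner (g x) h)) (at x)"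
    and t: "t > 0"
  shows "g (prox t f z) = (1/t) *\<^sub>R (z - prox t f z)"
proof -
  obtain y where gy: "g y = (1/t) *\<^sub>R (z - y)" using prox_exists[OF cvx der t] by blast
  note mi = prox_min_ineq[OF cvx der t gy]
  have "prox t f z = y"
    unfolding prox_def
  proof (rule the_equality)
    show "y \<in> prox_set t (\<lambda>x. ereal (f x)) z"
      unfolding prox_set_def
    proof (safe)
      fix u
      have "f y + norm (y - z)^2 / (2*t) \<le> f u + norm (u - z)^2 / (2*t)"
        using mi[of u] t by (smt (verit) divide_nonneg_pos zero_le_power2)
      then show "ereal (f y) + ereal (norm (y - z)^2 / (2*t)) \<le> ereal (f u) + ereal (norm (u - z)^2 / (2*t))"
        by simp
    qed
  next
    fix y' assume "y' \<in> prox_set t (\<lambda>x. ereal (f x)) z"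
    then have "ereal (f y') + ereal (norm (y' - z)^2 / (2*t)) \<le> ereal (f y) + ereal (norm (y - z)^2 / (2*t))"
      unfolding prox_set_def by blast
    then have "f y' + norm (y' - z)^2 / (2*t) \<le> f y + norm (y - z)^2 / (2*t)" by simp
    with mi[of y'] have "norm (y' - y)^2 / (2*t) \<le> 0" by linarith
    then have "norm (y' - y)^2 \<le> 0" using t by (simp add: divide_le_0_iff)
    then show "y' = y" by simp
  qed
  then show ?thesis using gy by simp
qed

theorem lemma6:
  fixes f1 f2 :: "'a::euclidean_space \<Rightarrow> real"
    and g1 g2 :: "'a \<Rightarrow> 'a"
    and f3 :: "'a \<Rightarrow> ereal"
    and L1 L2 \<gamma> lam \<alpha> :: real
    and x1 x2 x3 z1 z2 :: "nat \<Rightarrow> 'a"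
  assumes cvx1: "convex_on UNIV f1" and cvx2: "convex_on UNIV f2"
    and grad1: "\<And>x. (f1 has_derivative (\<lambda>h. inner (g1 x) h)) (at x)"
    and grad2: "\<And>x. (f2 has_derivative (\<lambda>h. inner (g2 x) h)) (at x)"
    and L1_pos: "L1 > 0" and L2_pos: "L2 > 0"
    and lip1: "lipschitz_on L1 UNIV g1" and lip2: "lipschitz_on L2 UNIV g2"
    and prop3: "proper_fun f3" and lsc3: "lsc_fun f3"
    and minimizer: "\<exists>xs. \<forall>y. ereal (f1 xs + f2 xs) + f3 xs \<le> ereal (f1 y + f2 y) + f3 y"
    and gamma_pos: "\<gamma> > 0" and gamma_bound: "\<gamma> < 1 / (L1 + L2)"
    and lambda_pos: "lam > 0" and alpha_pos: "\<alpha> > 0"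
    and it_x1: "\<And>k. x1 k = prox \<gamma> f1 (z1 k)"
    and it_x2: "\<And>k. x2 k = prox (\<gamma>/\<alpha>) f2 (z2 k /\<^sub>R \<alpha> + x1 k)"
    and it_x3: "\<And>k. x3 k \<in> prox_set \<gamma> f3 (x1 k - z1 k + x2 k - z2 k)"
    and it_z1: "\<And>k. z1 (Suc k) = z1 k + lam *\<^sub>R (x3 k - x1 k)"
    and it_z2: "\<And>k. z2 (Suc k) = z2 k + lam *\<^sub>R (x3 k - x2 k)"
  shows "\<forall>k\<ge>1. ryu_env \<gamma> \<alpha> f1 f2 f3 g1 g2 (z1 k) (z2 k)
            = aug_lagr (\<alpha>/\<gamma>) ((1-\<alpha>)/\<gamma>) f1 f2 f3 (x1 k) (x2 k) (x3 k)
                ((1/\<gamma>) *\<^sub>R (x1 k - z1 k)) ((1/\<gamma>) *\<^sub>R (\<alpha> *\<^sub>R (x2 k - x1 k) - z2 k))"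
proof (intro allI impI)
  fix k :: nat
  define a1 where "a1 = x1 k"
  define a2 where "a2 = x2 k"
  define a3 where "a3 = x3 k"
  define b1 where "b1 = z1 k"
  define b2 where "b2 = z2 k"
  define w where "w = a1 - b1 + a2 - b2"
  have G1: "g1 a1 = (1/\<gamma>) *\<^sub>R (b1 - a1)"
    unfolding a1_def b1_def it_x1 by (rule prox_grad[OF cvx1 grad1 gamma_pos])
  have G2: "g2 a2 = (1/(\<gamma>/\<alpha>)) *\<^sub>R (b2 /\<^sub>R \<alpha> + a1 - a2)"
    unfolding a2_def b2_def a1_def it_x2[of k] using gamma_pos alpha_pos
    by (metis prox_grad[OF cvx2 grad2] divide_pos_pos add_diff_eq)
  have P3: "\<And>u. f3 a3 + ereal (norm (a3 - w)^2 / (2*\<gamma>)) \<le> f3 u + ereal (norm (u - w)^2 / (2*\<gamma>))"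
    using it_x3[of k] unfolding prox_set_def a3_def w_def a1_def a2_def b1_def b2_def by blast
  define K where "K = f1 a1 + f2 a2 + QQ \<gamma> \<alpha> a1 a2 b1 b2 0"
  define T where "T y = f3 y
          + ereal (f1 a1 + inner (y - a1) (g1 a1) + (\<alpha>/(2*\<gamma>)) * norm (y - a1)^2)
          + ereal (f2 a2 + inner (y - a2) (g2 a2) + ((1-\<alpha>)/(2*\<gamma>)) * norm (y - a2)^2)" for y
  have Teq: "T y = f3 y + ereal (norm (y - w)^2 / (2*\<gamma>)) + ereal K" for y
  proof -
    have "T y = f3 y + ereal ((f1 a1 + inner (y - a1) (g1 a1) + (\<alpha>/(2*\<gamma>)) * norm (y - a1)^2)
          + (f2 a2 + inner (y - a2) (g2 a2) + ((1-\<alpha>)/(2*\<gamma>)) * norm (y - a2)^2))"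
      unfolding T_def by (simp add: add.assoc)
    also have "(f1 a1 + inner (y - a1) (g1 a1) + (\<alpha>/(2*\<gamma>)) * norm (y - a1)^2)
          + (f2 a2 + inner (y - a2) (g2 a2) + ((1-\<alpha>)/(2*\<gamma>)) * norm (y - a2)^2)
          = norm (y - w)^2 / (2*\<gamma>) + K"
      using QQ_const[OF gamma_pos alpha_pos, of a1 a2 b1 b2 y]
      unfolding K_def G1 G2 w_def QQ_def by simp
    finally show ?thesis by (simp add: add.assoc)
  qed
  have env: "ryu_env \<gamma> \<alpha> f1 f2 f3 g1 g2 (z1 k) (z2 k) = (INF y. T y)"
    unfolding ryu_env_def T_def Let_def a1_def a2_def b1_def b2_def it_x1[symmetric] it_x2[symmetric] ..
  have inf: "(INF y. T y) = T a3"
  proof (rule antisym)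
    show "(INF y. T y) \<le> T a3" by (rule INF_lower) simp
    show "T a3 \<le> (INF y. T y)"
    proof (rule INF_greatest)
      fix y
      show "T a3 \<le> T y" unfolding Teq using P3[of y] by (rule add_right_mono)
    qed
  qed
  have r1: "f1 a1 + inner (a3 - a1) (g1 a1) + (\<alpha>/(2*\<gamma>)) * norm (a3 - a1)^2
      = f1 a1 + inner ((1/\<gamma>) *\<^sub>R (a1 - b1)) (a1 - a3) + (\<alpha>/\<gamma>/2) * norm (a1 - a3)^2"
    unfolding G1 using gamma_pos by (simp add: inner_diff_left inner_diff_right norm_minus_commute inner_commute field_simps)
  have r2: "f2 a2 + inner (a3 - a2) (g2 a2) + ((1-\<alpha>)/(2*\<gamma>)) * norm (a3 - a2)^2
      = f2 a2 + inner ((1/\<gamma>) *\<^sub>R (\<alpha> *\<^sub>R (a2 - a1) - b2)) (a2 - a3) + ((1-\<alpha>)/\<gamma>/2) * norm (a2 - a3)^2"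
    unfolding G2 using alpha_pos gamma_pos
    by (simp add: inner_diff_left inner_diff_right inner_add_left inner_add_right norm_minus_commute inner_commute field_simps)
  show "ryu_env \<gamma> \<alpha> f1 f2 f3 g1 g2 (z1 k) (z2 k)
            = aug_lagr (\<alpha>/\<gamma>) ((1-\<alpha>)/\<gamma>) f1 f2 f3 (x1 k) (x2 k) (x3 k)
                ((1/\<gamma>) *\<^sub>R (x1 k - z1 k)) ((1/\<gamma>) *\<^sub>R (\<alpha> *\<^sub>R (x2 k - x1 k) - z2 k))"
    unfolding env inf T_def r1 r2 by (simp add: aug_lagr_def a1_def a2_def a3_def b1_def b2_def)
qed

end
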